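(* Let $M$ be a right $R$-module such that for every cyclic submodule $X$ of $M$ there is a decomposition $M=D\oplus D'$ in which $D'$ is a supplement of $X$ in $M$ and $D$ is $D'$-projective. Then $M$ is principally Goldie*-lifting.
   Context: $R$ is an associative ring with identity; modules are unital right $R$-modules. $K\ll N$ means $K$ is small in $N$. A submodule $S$ is a supplement of $X$ in $M$ if $X+S=M$ and $X\cap S\ll S$. A module $A$ is $B$-projective if every homomorphism $A\to B/C$ ($C\le B$) lifts to a homomorphism $A\to B$. For submodules $X,Y$ of $M$, $X\,\beta^*\,Y$ means $(X+Y)/X\ll M/X$ and $(X+Y)/Y\ll M/Y$. $M$ is principally Goldie*-lifting if for every cyclic submodule $X$ of $M$ there is a direct summand $D$ of $M$ with $X\,\beta^*\,D$. *)

theory Defs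
  imports "HOL-Algebra.Ring"
begin

text \<open>The additive group of the module is an HOL-Algebra
 abelian group; the right scalar action is the extra field rsmult
 (rsmult M x r stands for x r).\<close>

record ('r, 'm) rmod = "'m ring" + rsmult :: "'m \<Rightarrow> 'r \<Rightarrow> 'm"

definition rmodule :: "'r ring \<Rightarrow> ('r, 'm) rmod \<Rightarrow> bool" where
  "rmodule R M \<longleftrightarrow> ring R \<and> abelian_group M \<and>
     (\<forall>x\<in>carrier M. \<forall>r\<in>carrier R. rsmult M x r \<in> carrier M) \<and>
     (\<forall>x\<in>carrier M. \<forall>y\<in>carrier M. \<forall>r\<in>carrier R.
        rsmult M (x \<oplus>\<^bsub>M\<^esub> y) r = rsmult M x r \<oplus>\<^bsub>M\<^esub> rsmult M y r) \<and>
     (\<forall>x\<in>carrier M. \<forall>r\<in>carrier R. \<forall>s\<in>carrier R.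
        rsmult M x (r \<oplus>\<^bsub>R\<^esub> s) = rsmult M x r \<oplus>\<^bsub>M\<^esub> rsmult M x s) \<and>
     (\<forall>x\<in>carrier M. \<forall>r\<in>carrier R. \<forall>s\<in>carrier R.
        rsmult M (rsmult M x r) s = rsmult M x (r \<otimes>\<^bsub>R\<^esub> s)) \<and>
     (\<forall>x\<in>carrier M. rsmult M x \<one>\<^bsub>R\<^esub> = x)"

definition rsubmodule :: "'r ring \<Rightarrow> ('r, 'm) rmod \<Rightarrow> 'm set \<Rightarrow> bool" where
  "rsubmodule R M N \<longleftrightarrow> N \<subseteq> carrier M \<and> \<zero>\<^bsub>M\<^esub> \<in> N \<and>
     (\<forall>x\<in>N. \<forall>y\<in>N. x \<oplus>\<^bsub>M\<^esub> y \<in> N) \<and>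
     (\<forall>x\<in>N. \<ominus>\<^bsub>M\<^esub> x \<in> N) \<and>
     (\<forall>x\<in>N. \<forall>r\<in>carrier R. rsmult M x r \<in> N)"

definition submod :: "('r, 'm) rmod \<Rightarrow> 'm set \<Rightarrow> ('r, 'm) rmod" where
  "submod M N = M\<lparr>carrier := N\<rparr>"

definition msum :: "('r, 'm) rmod \<Rightarrow> 'm set \<Rightarrow> 'm set \<Rightarrow> 'm set" where
  "msum M X Y = {x \<oplus>\<^bsub>M\<^esub> y | x y. x \<in> X \<and> y \<in> Y}"

definition mcoset :: "('r, 'm) rmod \<Rightarrow> 'm set \<Rightarrow> 'm \<Rightarrow> 'm set" where
  "mcoset M C x = {x \<oplus>\<^bsub>M\<^esub> c | c. c \<in> C}"

definition quot :: "('r, 'm) rmod \<Rightarrow> 'm set \<Rightarrow> ('r, 'm set) rmod" where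
  "quot M C = \<lparr>carrier = mcoset M C ` carrier M,
               mult = (\<lambda>_ _. undefined), one = undefined,
               zero = C,
               add = (\<lambda>A B. {a \<oplus>\<^bsub>M\<^esub> b | a b. a \<in> A \<and> b \<in> B}),
               rsmult = (\<lambda>A r. {rsmult M a r \<oplus>\<^bsub>M\<^esub> c | a c. a \<in> A \<and> c \<in> C})\<rparr>"

definition rhom :: "'r ring \<Rightarrow> ('r, 'a) rmod \<Rightarrow> ('r, 'b) rmod \<Rightarrow> ('a \<Rightarrow> 'b) \<Rightarrow> bool" where
  "rhom R A B f \<longleftrightarrow> f \<in> carrier A \<rightarrow> carrier B \<and>
     (\<forall>x\<in>carrier A. \<forall>y\<in>carrier A. f (x \<oplus>\<^bsub>A\<^esub> y) = f x \<oplus>\<^bsub>B\<^esub> f y) \<and>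
     (\<forall>x\<in>carrier A. \<forall>r\<in>carrier R. f (rsmult A x r) = rsmult B (f x) r)"

definition small_in :: "'r ring \<Rightarrow> ('r, 'a) rmod \<Rightarrow> 'a set \<Rightarrow> bool" where
  "small_in R Q K \<longleftrightarrow> K \<subseteq> carrier Q \<and>
     (\<forall>L. rsubmodule R Q L \<and> msum Q K L = carrier Q \<longrightarrow> L = carrier Q)"

definition supplement :: "'r ring \<Rightarrow> ('r, 'm) rmod \<Rightarrow> 'm set \<Rightarrow> 'm set \<Rightarrow> bool" where
  "supplement R M X S \<longleftrightarrow> rsubmodule R M S \<and> msum M X S = carrier M \<and>
     small_in R (submod M S) (X \<inter> S)"

definition rel_projective :: "'r ring \<Rightarrow> ('r, 'm) rmod \<Rightarrow> ('r, 'm) rmod \<Rightarrow> bool" where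
  "rel_projective R A B \<longleftrightarrow>
     (\<forall>C f. rsubmodule R B C \<and> rhom R A (quot B C) f \<longrightarrow>
        (\<exists>h. rhom R A B h \<and> (\<forall>a\<in>carrier A. mcoset B C (h a) = f a)))"

definition int_dsum :: "'r ring \<Rightarrow> ('r, 'm) rmod \<Rightarrow> 'm set \<Rightarrow> 'm set \<Rightarrow> bool" where
  "int_dsum R M D D' \<longleftrightarrow> rsubmodule R M D \<and> rsubmodule R M D' \<and>
     msum M D D' = carrier M \<and> D \<inter> D' = {\<zero>\<^bsub>M\<^esub>}"

definition direct_summand :: "'r ring \<Rightarrow> ('r, 'm) rmod \<Rightarrow> 'm set \<Rightarrow> bool" where
  "direct_summand R M D \<longleftrightarrow> (\<exists>D'. int_dsum R M D D')"

definition beta_star :: "'r ring \<Rightarrow> ('r, 'm) rmod \<Rightarrow> 'm set \<Rightarrow> 'm set \<Rightarrow> bool" where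
  "beta_star R M X Y \<longleftrightarrow>
     small_in R (quot M X) (mcoset M X ` msum M X Y) \<and>
     small_in R (quot M Y) (mcoset M Y ` msum M X Y)"

definition cyclic_sub :: "'r ring \<Rightarrow> ('r, 'm) rmod \<Rightarrow> 'm \<Rightarrow> 'm set" where
  "cyclic_sub R M m = {rsmult M m r | r. r \<in> carrier R}"

definition is_cyclic_submodule :: "'r ring \<Rightarrow> ('r, 'm) rmod \<Rightarrow> 'm set \<Rightarrow> bool" where
  "is_cyclic_submodule R M X \<longleftrightarrow> (\<exists>m\<in>carrier M. X = cyclic_sub R M m)"

definition principally_goldie_star_lifting :: "'r ring \<Rightarrow> ('r, 'm) rmod \<Rightarrow> bool" where
  "principally_goldie_star_lifting R M \<longleftrightarrow>
     (\<forall>X. is_cyclic_submodule R M X \<longrightarrow>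
        (\<exists>D. direct_summand R M D \<and> beta_star R M X D))"

end

theory Submission imports Defs begin

lemma a_inv_char:
  fixes Q :: "('a,'b) ring_scheme"
  assumes "y \<in> carrier Q" "x \<oplus>\<^bsub>Q\<^esub> y = \<zero>\<^bsub>Q\<^esub>" "y \<oplus>\<^bsub>Q\<^esub> x = \<zero>\<^bsub>Q\<^esub>"
    "\<And>z. z \<in> carrier Q \<Longrightarrow> x \<oplus>\<^bsub>Q\<^esub> z = \<zero>\<^bsub>Q\<^esub> \<Longrightarrow> z = y"
  shows "\<ominus>\<^bsub>Q\<^esub> x = y"
  unfolding a_inv_def m_inv_def
proof (rule the_equality)
  show "y \<in> carrier (add_monoid Q) \<and> x \<otimes>\<^bsub>add_monoid Q\<^esub> y = \<one>\<^bsub>add_monoid Q\<^esub> \<and> y \<otimes>\<^bsub>add_monoid Q\<^esub> x = \<one>\<^bsub>add_monoid Q\<^esub>"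
    using assms(1-3) by simp
  fix z assume "z \<in> carrier (add_monoid Q) \<and> x \<otimes>\<^bsub>add_monoid Q\<^esub> z = \<one>\<^bsub>add_monoid Q\<^esub> \<and> z \<otimes>\<^bsub>add_monoid Q\<^esub> x = \<one>\<^bsub>add_monoid Q\<^esub>"
  thus "z = y" using assms(4) by simp
qed

locale rmc =
  fixes R :: "'r ring" and M :: "('r,'m) rmod"
  assumes rm: "rmodule R M"
begin

sublocale G: abelian_group M using rm unfolding rmodule_def by auto

lemma Rr: "ring R" using rm unfolding rmodule_def by auto

lemma smc[simp]: "x \<in> carrier M \<Longrightarrow> r \<in> carrier R \<Longrightarrow> rsmult M x r \<in> carrier M"
  using rm unfolding rmodule_def by auto
lemma sm_add1: "x \<in> carrier M \<Longrightarrow> y \<in> carrier M \<Longrightarrow> r \<in> carrier R \<Longrightarrow>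
   rsmult M (x \<oplus>\<^bsub>M\<^esub> y) r = rsmult M x r \<oplus>\<^bsub>M\<^esub> rsmult M y r"
  using rm unfolding rmodule_def by auto
lemma sm_add2: "x \<in> carrier M \<Longrightarrow> r \<in> carrier R \<Longrightarrow> s \<in> carrier R \<Longrightarrow>
   rsmult M x (r \<oplus>\<^bsub>R\<^esub> s) = rsmult M x r \<oplus>\<^bsub>M\<^esub> rsmult M x s"
  using rm unfolding rmodule_def by auto
lemma sm_assoc: "x \<in> carrier M \<Longrightarrow> r \<in> carrier R \<Longrightarrow> s \<in> carrier R \<Longrightarrow>
   rsmult M (rsmult M x r) s = rsmult M x (r \<otimes>\<^bsub>R\<^esub> s)"
  using rm unfolding rmodule_def by auto

lemma grp_cancel: "a \<in> carrier M \<Longrightarrow> b \<in> carrier M \<Longrightarrow> a \<oplus>\<^bsub>M\<^esub> b = a \<Longrightarrow> b = \<zero>\<^bsub>M\<^esub>"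
  by (metis G.add.l_cancel_one)

lemma sm_zero: "x \<in> carrier M \<Longrightarrow> rsmult M x \<zero>\<^bsub>R\<^esub> = \<zero>\<^bsub>M\<^esub>"
proof -
  assume x: "x \<in> carrier M"
  have z: "\<zero>\<^bsub>R\<^esub> \<in> carrier R" using Rr ring.ring_simprules(2) by blast
  have "rsmult M x \<zero>\<^bsub>R\<^esub> = rsmult M x (\<zero>\<^bsub>R\<^esub> \<oplus>\<^bsub>R\<^esub> \<zero>\<^bsub>R\<^esub>)"
    using Rr z by (simp add: ring.ring_simprules(15))
  also have "\<dots> = rsmult M x \<zero>\<^bsub>R\<^esub> \<oplus>\<^bsub>M\<^esub> rsmult M x \<zero>\<^bsub>R\<^esub>" using sm_add2 x z by blast
  finally show ?thesis using grp_cancel x z smc by metis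
qed

lemma zero_sm: "r \<in> carrier R \<Longrightarrow> rsmult M \<zero>\<^bsub>M\<^esub> r = \<zero>\<^bsub>M\<^esub>"
proof -
  assume r: "r \<in> carrier R"
  have "rsmult M \<zero>\<^bsub>M\<^esub> r = rsmult M (\<zero>\<^bsub>M\<^esub> \<oplus>\<^bsub>M\<^esub> \<zero>\<^bsub>M\<^esub>) r" by simp
  also have "\<dots> = rsmult M \<zero>\<^bsub>M\<^esub> r \<oplus>\<^bsub>M\<^esub> rsmult M \<zero>\<^bsub>M\<^esub> r" using sm_add1[OF G.zero_closed G.zero_closed r] .
  finally show ?thesis using grp_cancel r smc G.zero_closed by metis
qed

lemma sm_neg: "x \<in> carrier M \<Longrightarrow> r \<in> carrier R \<Longrightarrow> rsmult M (\<ominus>\<^bsub>M\<^esub> x) r = \<ominus>\<^bsub>M\<^esub> rsmult M x r"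
proof -
  assume x: "x \<in> carrier M" and r: "r \<in> carrier R"
  have "rsmult M (\<ominus>\<^bsub>M\<^esub> x) r \<oplus>\<^bsub>M\<^esub> rsmult M x r = \<zero>\<^bsub>M\<^esub>"
    using sm_add1[of "\<ominus>\<^bsub>M\<^esub> x" x r] x r zero_sm by (simp add: G.l_neg)
  thus ?thesis using x r by (metis G.a_inv_closed G.minus_equality smc)
qed

lemma sm_minus: "x \<in> carrier M \<Longrightarrow> y \<in> carrier M \<Longrightarrow> r \<in> carrier R \<Longrightarrow>
   rsmult M (x \<ominus>\<^bsub>M\<^esub> y) r = rsmult M x r \<ominus>\<^bsub>M\<^esub> rsmult M y r"
  by (simp add: G.minus_eq sm_add1 sm_neg)

lemma neg_zero[simp]: "\<ominus>\<^bsub>M\<^esub> \<zero>\<^bsub>M\<^esub> = \<zero>\<^bsub>M\<^esub>"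
  by (metis G.zero_closed G.r_zero G.minus_equality)

lemma diff_trans: "x \<in> carrier M \<Longrightarrow> y \<in> carrier M \<Longrightarrow> z \<in> carrier M \<Longrightarrow>
   z \<ominus>\<^bsub>M\<^esub> y = (z \<ominus>\<^bsub>M\<^esub> x) \<oplus>\<^bsub>M\<^esub> (x \<ominus>\<^bsub>M\<^esub> y)"
  by (simp add: G.minus_eq G.a_assoc G.r_neg1)

lemma diff_add_cancel: "x \<in> carrier M \<Longrightarrow> z \<in> carrier M \<Longrightarrow> x \<oplus>\<^bsub>M\<^esub> (z \<ominus>\<^bsub>M\<^esub> x) = z"
  by (metis G.a_inv_closed G.add.m_lcomm G.minus_eq G.r_neg G.r_zero)

lemma add_diff_cancel: "x \<in> carrier M \<Longrightarrow> c \<in> carrier M \<Longrightarrow> (x \<oplus>\<^bsub>M\<^esub> c) \<ominus>\<^bsub>M\<^esub> x = c"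
  by (metis G.a_closed G.minus_eq G.r_neg1 G.a_comm G.a_inv_closed G.a_assoc)

lemma sub_props:
  assumes "rsubmodule R M C"
  shows "C \<subseteq> carrier M" "\<zero>\<^bsub>M\<^esub> \<in> C" "\<And>x y. x \<in> C \<Longrightarrow> y \<in> C \<Longrightarrow> x \<oplus>\<^bsub>M\<^esub> y \<in> C"
    "\<And>x. x \<in> C \<Longrightarrow> \<ominus>\<^bsub>M\<^esub> x \<in> C" "\<And>x r. x \<in> C \<Longrightarrow> r \<in> carrier R \<Longrightarrow> rsmult M x r \<in> C"
  using assms unfolding rsubmodule_def by auto

lemma sub_minus: "rsubmodule R M C \<Longrightarrow> x \<in> C \<Longrightarrow> y \<in> C \<Longrightarrow> x \<ominus>\<^bsub>M\<^esub> y \<in> C"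
  using sub_props by (simp add: G.minus_eq)

lemma coset_mem:
  assumes C: "rsubmodule R M C" and x: "x \<in> carrier M"
  shows "z \<in> mcoset M C x \<longleftrightarrow> z \<in> carrier M \<and> z \<ominus>\<^bsub>M\<^esub> x \<in> C"
proof
  assume "z \<in> mcoset M C x"
  then obtain c where c: "c \<in> C" "z = x \<oplus>\<^bsub>M\<^esub> c" unfolding mcoset_def by auto
  have cc: "c \<in> carrier M" using c sub_props(1)[OF C] by auto
  show "z \<in> carrier M \<and> z \<ominus>\<^bsub>M\<^esub> x \<in> C" using c cc x add_diff_cancel by auto
next
  assume "z \<in> carrier M \<and> z \<ominus>\<^bsub>M\<^esub> x \<in> C"
  thus "z \<in> mcoset M C x" unfolding mcoset_def using diff_add_cancel[OF x] by (metis (mono_tags, lifting) mem_Collect_eq)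
qed

lemma coset_self: "rsubmodule R M C \<Longrightarrow> x \<in> carrier M \<Longrightarrow> x \<in> mcoset M C x"
  using coset_mem sub_props(2) by (simp add: G.minus_eq G.r_neg)

lemma coset_eq:
  assumes C: "rsubmodule R M C" and x: "x \<in> carrier M" and y: "y \<in> carrier M"
  shows "mcoset M C x = mcoset M C y \<longleftrightarrow> x \<ominus>\<^bsub>M\<^esub> y \<in> C"
proof
  assume "mcoset M C x = mcoset M C y"
  thus "x \<ominus>\<^bsub>M\<^esub> y \<in> C" using coset_self[OF C x] coset_mem[OF C y] by auto
next
  assume h: "x \<ominus>\<^bsub>M\<^esub> y \<in> C"
  have h': "y \<ominus>\<^bsub>M\<^esub> x \<in> C"
  proof -
    have "\<ominus>\<^bsub>M\<^esub> (x \<ominus>\<^bsub>M\<^esub> y) = y \<ominus>\<^bsub>M\<^esub> x" using x y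
      by (simp add: G.minus_eq G.minus_add G.minus_minus G.a_comm)
    thus ?thesis using h sub_props(4)[OF C] by metis
  qed
  show "mcoset M C x = mcoset M C y"
  proof (rule Set.set_eqI)
    fix z
    show "z \<in> mcoset M C x \<longleftrightarrow> z \<in> mcoset M C y"
      unfolding coset_mem[OF C x] coset_mem[OF C y]
      using diff_trans[OF x y] diff_trans[OF y x] h h' sub_props(3)[OF C] by metis
  qed
qed

lemma coset_zero: "rsubmodule R M C \<Longrightarrow> mcoset M C \<zero>\<^bsub>M\<^esub> = C"
  unfolding mcoset_def using sub_props(1) by force

lemma quot_add:
  assumes C: "rsubmodule R M C" and x: "x \<in> carrier M" and y: "y \<in> carrier M"
  shows "mcoset M C x \<oplus>\<^bsub>quot M C\<^esub> mcoset M C y = mcoset M C (x \<oplus>\<^bsub>M\<^esub> y)"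
proof -
  have "{a \<oplus>\<^bsub>M\<^esub> b | a b. a \<in> mcoset M C x \<and> b \<in> mcoset M C y} = mcoset M C (x \<oplus>\<^bsub>M\<^esub> y)"
  proof (rule Set.set_eqI, rule iffI)
    fix z assume "z \<in> {a \<oplus>\<^bsub>M\<^esub> b | a b. a \<in> mcoset M C x \<and> b \<in> mcoset M C y}"
    then obtain a b where ab: "z = a \<oplus>\<^bsub>M\<^esub> b" "a \<in> mcoset M C x" "b \<in> mcoset M C y" by auto
    hence a: "a \<in> carrier M" "a \<ominus>\<^bsub>M\<^esub> x \<in> C" and b: "b \<in> carrier M" "b \<ominus>\<^bsub>M\<^esub> y \<in> C"
      using coset_mem[OF C x] coset_mem[OF C y] by auto
    have "(a \<oplus>\<^bsub>M\<^esub> b) \<ominus>\<^bsub>M\<^esub> (x \<oplus>\<^bsub>M\<^esub> y) = (a \<ominus>\<^bsub>M\<^esub> x) \<oplus>\<^bsub>M\<^esub> (b \<ominus>\<^bsub>M\<^esub> y)"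
      using a b x y by (simp add: G.minus_eq G.minus_add G.a_ac)
    thus "z \<in> mcoset M C (x \<oplus>\<^bsub>M\<^esub> y)" using ab a b x y coset_mem[OF C] sub_props(3)[OF C] by simp
  next
    fix z assume z: "z \<in> mcoset M C (x \<oplus>\<^bsub>M\<^esub> y)"
    hence zc: "z \<in> carrier M" "z \<ominus>\<^bsub>M\<^esub> (x \<oplus>\<^bsub>M\<^esub> y) \<in> C" using coset_mem[OF C] x y by auto
    define a where "a = x \<oplus>\<^bsub>M\<^esub> (z \<ominus>\<^bsub>M\<^esub> (x \<oplus>\<^bsub>M\<^esub> y))"
    have ac: "a \<in> carrier M" using a_def zc x y by simp
    have "a \<in> mcoset M C x" using coset_mem[OF C x] ac zc x y add_diff_cancel a_def by simp
    moreover have "y \<in> mcoset M C y" using coset_self[OF C y] .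
    moreover have "z = a \<oplus>\<^bsub>M\<^esub> y" unfolding a_def using zc x y
      by (metis G.a_assoc G.a_closed G.a_comm G.minus_closed diff_add_cancel)
    ultimately show "z \<in> {a \<oplus>\<^bsub>M\<^esub> b | a b. a \<in> mcoset M C x \<and> b \<in> mcoset M C y}" by blast
  qed
  thus ?thesis unfolding quot_def by simp
qed

lemma quot_smult:
  assumes C: "rsubmodule R M C" and x: "x \<in> carrier M" and r: "r \<in> carrier R"
  shows "rsmult (quot M C) (mcoset M C x) r = mcoset M C (rsmult M x r)"
proof -
  have "{rsmult M a r \<oplus>\<^bsub>M\<^esub> c | a c. a \<in> mcoset M C x \<and> c \<in> C} = mcoset M C (rsmult M x r)"
  proof (rule Set.set_eqI, rule iffI)
    fix z assume "z \<in> {rsmult M a r \<oplus>\<^bsub>M\<^esub> c | a c. a \<in> mcoset M C x \<and> c \<in> C}"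
    then obtain a c where ac: "z = rsmult M a r \<oplus>\<^bsub>M\<^esub> c" "a \<in> mcoset M C x" "c \<in> C" by auto
    hence a: "a \<in> carrier M" "a \<ominus>\<^bsub>M\<^esub> x \<in> C" using coset_mem[OF C x] by auto
    have cc: "c \<in> carrier M" using ac sub_props(1)[OF C] by auto
    have "(rsmult M a r \<oplus>\<^bsub>M\<^esub> c) \<ominus>\<^bsub>M\<^esub> rsmult M x r = rsmult M (a \<ominus>\<^bsub>M\<^esub> x) r \<oplus>\<^bsub>M\<^esub> c"
      using a cc x r by (simp add: sm_add1 sm_neg G.minus_eq G.a_ac)
    thus "z \<in> mcoset M C (rsmult M x r)" using ac a cc x r coset_mem[OF C] sub_props(3,5)[OF C] by simp
  next
    fix z assume z: "z \<in> mcoset M C (rsmult M x r)"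
    hence zc: "z \<in> carrier M" "z \<ominus>\<^bsub>M\<^esub> rsmult M x r \<in> C" using coset_mem[OF C] x r by auto
    have "z = rsmult M x r \<oplus>\<^bsub>M\<^esub> (z \<ominus>\<^bsub>M\<^esub> rsmult M x r)" using diff_add_cancel zc x r by simp
    thus "z \<in> {rsmult M a r \<oplus>\<^bsub>M\<^esub> c | a c. a \<in> mcoset M C x \<and> c \<in> C}"
      using coset_self[OF C x] zc by blast
  qed
  thus ?thesis unfolding quot_def by simp
qed

lemma quot_zero: "\<zero>\<^bsub>quot M C\<^esub> = C" unfolding quot_def by simp
lemma quot_carrier: "carrier (quot M C) = mcoset M C ` carrier M" unfolding quot_def by simp

lemma submod_simps[simp]: "carrier (submod M S) = S" "add (submod M S) = add M"
  "zero (submod M S) = zero M" "rsmult (submod M S) = rsmult M"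
  "mcoset (submod M S) = mcoset M" "msum (submod M S) = msum M"
  unfolding submod_def by (auto simp: mcoset_def msum_def fun_eq_iff)

lemma quot_submod_simps[simp]: "carrier (quot (submod M S) C) = mcoset M C ` S"
  "add (quot (submod M S) C) = add (quot M C)" "zero (quot (submod M S) C) = zero (quot M C)"
  "rsmult (quot (submod M S) C) = rsmult (quot M C)"
  unfolding quot_def by simp_all

lemma quot_neg:
  assumes C: "rsubmodule R M C" and x: "x \<in> carrier M"
  shows "\<ominus>\<^bsub>quot M C\<^esub> (mcoset M C x) = mcoset M C (\<ominus>\<^bsub>M\<^esub> x)"
proof (rule a_inv_char)
  have nx: "\<ominus>\<^bsub>M\<^esub> x \<in> carrier M" using x by simp
  show "mcoset M C (\<ominus>\<^bsub>M\<^esub> x) \<in> carrier (quot M C)" using nx by (simp add: quot_carrier)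
  show "mcoset M C x \<oplus>\<^bsub>quot M C\<^esub> mcoset M C (\<ominus>\<^bsub>M\<^esub> x) = \<zero>\<^bsub>quot M C\<^esub>"
    using quot_add[OF C x nx] coset_zero[OF C] nx x by (simp add: quot_zero G.r_neg)
  show "mcoset M C (\<ominus>\<^bsub>M\<^esub> x) \<oplus>\<^bsub>quot M C\<^esub> mcoset M C x = \<zero>\<^bsub>quot M C\<^esub>"
    using quot_add[OF C nx x] coset_zero[OF C] nx x by (simp add: quot_zero G.l_neg)
  fix y assume y0: "y \<in> carrier (quot M C)" "mcoset M C x \<oplus>\<^bsub>quot M C\<^esub> y = \<zero>\<^bsub>quot M C\<^esub>"
  hence y: "y \<in> mcoset M C ` carrier M" "mcoset M C x \<oplus>\<^bsub>quot M C\<^esub> y = C"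
    by (auto simp: quot_carrier quot_zero)
  then obtain w where w: "w \<in> carrier M" "y = mcoset M C w" by auto
  have "mcoset M C (x \<oplus>\<^bsub>M\<^esub> w) = mcoset M C \<zero>\<^bsub>M\<^esub>" using y w quot_add[OF C x] coset_zero[OF C] by simp
  hence "x \<oplus>\<^bsub>M\<^esub> w \<in> C" using coset_eq[OF C] x w by (simp add: G.minus_eq G.add.inv_one)
  moreover have "w \<ominus>\<^bsub>M\<^esub> (\<ominus>\<^bsub>M\<^esub> x) = x \<oplus>\<^bsub>M\<^esub> w" using x w by (simp add: G.minus_eq G.minus_minus G.a_comm)
  ultimately show "y = mcoset M C (\<ominus>\<^bsub>M\<^esub> x)" using coset_eq[OF C] w x by simp
qed

lemma submod_neg:
  assumes S: "rsubmodule R M S" and x: "x \<in> S"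
  shows "\<ominus>\<^bsub>submod M S\<^esub> x = \<ominus>\<^bsub>M\<^esub> x"
proof (rule a_inv_char)
  have xc: "x \<in> carrier M" using x sub_props(1)[OF S] by auto
  show "\<ominus>\<^bsub>M\<^esub> x \<in> carrier (submod M S)" using sub_props(4)[OF S x] by simp
  show "x \<oplus>\<^bsub>submod M S\<^esub> \<ominus>\<^bsub>M\<^esub> x = \<zero>\<^bsub>submod M S\<^esub>" using xc by (simp add: G.r_neg)
  show "\<ominus>\<^bsub>M\<^esub> x \<oplus>\<^bsub>submod M S\<^esub> x = \<zero>\<^bsub>submod M S\<^esub>" using xc by (simp add: G.l_neg)
  fix y assume "y \<in> carrier (submod M S)" "x \<oplus>\<^bsub>submod M S\<^esub> y = \<zero>\<^bsub>submod M S\<^esub>"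
  hence "y \<in> S" "x \<oplus>\<^bsub>M\<^esub> y = \<zero>\<^bsub>M\<^esub>" by auto
  thus "y = \<ominus>\<^bsub>M\<^esub> x" using xc sub_props(1)[OF S]
    by (metis G.a_comm G.minus_equality subsetD)
qed


lemma h1: "x \<in> carrier M \<Longrightarrow> y \<in> carrier M \<Longrightarrow> x \<oplus>\<^bsub>M\<^esub> (y \<oplus>\<^bsub>M\<^esub> \<ominus>\<^bsub>M\<^esub> x) = y"
  by (metis G.a_comm G.a_inv_closed G.r_neg2)

lemma gid:
  assumes "a \<in> carrier M" "b \<in> carrier M" "c \<in> carrier M" "d \<in> carrier M"
  shows "a \<ominus>\<^bsub>M\<^esub> b = (c \<ominus>\<^bsub>M\<^esub> b) \<ominus>\<^bsub>M\<^esub> (c \<ominus>\<^bsub>M\<^esub> a)"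
   "a \<ominus>\<^bsub>M\<^esub> b = (a \<ominus>\<^bsub>M\<^esub> c) \<ominus>\<^bsub>M\<^esub> (b \<ominus>\<^bsub>M\<^esub> c)"
   "(a \<oplus>\<^bsub>M\<^esub> b) \<ominus>\<^bsub>M\<^esub> (c \<oplus>\<^bsub>M\<^esub> d) = (a \<ominus>\<^bsub>M\<^esub> c) \<oplus>\<^bsub>M\<^esub> (b \<ominus>\<^bsub>M\<^esub> d)"
   "\<ominus>\<^bsub>M\<^esub> (a \<ominus>\<^bsub>M\<^esub> b) = (\<ominus>\<^bsub>M\<^esub> a) \<ominus>\<^bsub>M\<^esub> (\<ominus>\<^bsub>M\<^esub> b)"
   "(a \<ominus>\<^bsub>M\<^esub> b) \<oplus>\<^bsub>M\<^esub> (b \<oplus>\<^bsub>M\<^esub> c) = a \<oplus>\<^bsub>M\<^esub> c"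
   "(a \<ominus>\<^bsub>M\<^esub> b) \<oplus>\<^bsub>M\<^esub> b = a"
   "(a \<oplus>\<^bsub>M\<^esub> b) \<ominus>\<^bsub>M\<^esub> b = a"
   "a \<ominus>\<^bsub>M\<^esub> a = \<zero>\<^bsub>M\<^esub>"
  using assms by (simp_all add: G.minus_eq G.minus_add G.minus_minus G.a_ac G.r_neg G.l_neg G.r_neg1 G.r_neg2 h1)


lemma sub_inter: "rsubmodule R M X \<Longrightarrow> rsubmodule R M Y \<Longrightarrow> rsubmodule R M (X \<inter> Y)"
  unfolding rsubmodule_def by auto

lemma sub_in_submod:
  assumes S: "rsubmodule R M S" and C: "rsubmodule R M C" and CS: "C \<subseteq> S"
  shows "rsubmodule R (submod M S) C"
  unfolding rsubmodule_def using sub_props[OF C] CS submod_neg[OF S] by auto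

lemma cyclic_is_sub:
  assumes m: "m \<in> carrier M"
  shows "rsubmodule R M (cyclic_sub R M m)"
proof -
  interpret Rr: ring R by (rule Rr)
  have "\<zero>\<^bsub>M\<^esub> \<in> cyclic_sub R M m"
    unfolding cyclic_sub_def using sm_zero[OF m] Rr.zero_closed by (metis (mono_tags, lifting) mem_Collect_eq)
  moreover have "\<forall>x\<in>cyclic_sub R M m. \<forall>y\<in>cyclic_sub R M m. x \<oplus>\<^bsub>M\<^esub> y \<in> cyclic_sub R M m"
    unfolding cyclic_sub_def using sm_add2[OF m] by (smt (verit) Rr.add.m_closed mem_Collect_eq)
  moreover have "\<forall>x\<in>cyclic_sub R M m. \<ominus>\<^bsub>M\<^esub> x \<in> cyclic_sub R M m"
  proof
    fix x assume "x \<in> cyclic_sub R M m"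
    then obtain r where r: "r \<in> carrier R" "x = rsmult M m r" unfolding cyclic_sub_def by auto
    have "rsmult M m r \<oplus>\<^bsub>M\<^esub> rsmult M m (\<ominus>\<^bsub>R\<^esub> r) = \<zero>\<^bsub>M\<^esub>"
      using sm_add2[OF m r(1) Rr.a_inv_closed[OF r(1)]] sm_zero[OF m] r by (simp add: Rr.r_neg)
    hence "\<ominus>\<^bsub>M\<^esub> x = rsmult M m (\<ominus>\<^bsub>R\<^esub> r)" using r m
      by (metis G.a_comm G.minus_equality Rr.a_inv_closed smc)
    thus "\<ominus>\<^bsub>M\<^esub> x \<in> cyclic_sub R M m" unfolding cyclic_sub_def using r by blast
  qed
  moreover have "\<forall>x\<in>cyclic_sub R M m. \<forall>r\<in>carrier R. rsmult M x r \<in> cyclic_sub R M m"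
    unfolding cyclic_sub_def using sm_assoc[OF m] by (smt (verit) Rr.m_closed mem_Collect_eq)
  moreover have "cyclic_sub R M m \<subseteq> carrier M" unfolding cyclic_sub_def using m by auto
  ultimately show ?thesis unfolding rsubmodule_def by blast
qed


end

context rmc begin
lemma exists_A:
  assumes X: "rsubmodule R M X" and ds: "int_dsum R M D D'" and sup: "supplement R M X D'"
    and pj: "rel_projective R (submod M D) (submod M D')"
  shows "\<exists>A. A \<subseteq> X \<and> int_dsum R M A D'"
proof -
  have D: "rsubmodule R M D" and D': "rsubmodule R M D'" and DD: "msum M D D' = carrier M"
    and DI: "D \<inter> D' = {\<zero>\<^bsub>M\<^esub>}" using ds unfolding int_dsum_def by auto
  have XD: "msum M X D' = carrier M" using sup unfolding supplement_def by auto
  have Xc: "X \<subseteq> carrier M" and Dc: "D \<subseteq> carrier M" and D'c: "D' \<subseteq> carrier M"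
    using sub_props(1) X D D' by auto
  define C where "C = X \<inter> D'"
  have C: "rsubmodule R M C" unfolding C_def using sub_inter X D' by auto
  have CS: "rsubmodule R (submod M D') C" using sub_in_submod[OF D' C] C_def by auto
  define pr where "pr d = (SOME e. e \<in> D' \<and> d \<ominus>\<^bsub>M\<^esub> e \<in> X)" for d
  have pr: "pr d \<in> D' \<and> d \<ominus>\<^bsub>M\<^esub> pr d \<in> X" if d: "d \<in> carrier M" for d
  proof -
    obtain x e where xe: "x \<in> X" "e \<in> D'" "d = x \<oplus>\<^bsub>M\<^esub> e"
    proof -
      have "d \<in> msum M X D'" using d XD by simp
      thus ?thesis using that unfolding msum_def by auto
    qed
    have "d \<ominus>\<^bsub>M\<^esub> e = x" using xe Xc D'c gid(7) by blast
    hence "e \<in> D' \<and> d \<ominus>\<^bsub>M\<^esub> e \<in> X" using xe by auto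
    thus ?thesis unfolding pr_def by (rule someI)
  qed
  have prc: "mcoset M C (pr d) = mcoset M C e"
    if d: "d \<in> carrier M" and e: "e \<in> D'" "d \<ominus>\<^bsub>M\<^esub> e \<in> X" for d e
  proof -
    have p: "pr d \<in> D'" "d \<ominus>\<^bsub>M\<^esub> pr d \<in> X" using pr d by auto
    have "pr d \<ominus>\<^bsub>M\<^esub> e = (d \<ominus>\<^bsub>M\<^esub> e) \<ominus>\<^bsub>M\<^esub> (d \<ominus>\<^bsub>M\<^esub> pr d)"
      using gid(1) d e p D'c by blast
    hence "pr d \<ominus>\<^bsub>M\<^esub> e \<in> X" using sub_minus[OF X] p e by simp
    moreover have "pr d \<ominus>\<^bsub>M\<^esub> e \<in> D'" using sub_minus[OF D'] p e by simp
    ultimately show ?thesis using coset_eq[OF C] p e D'c C_def by auto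
  qed
  define f where "f d = mcoset M C (pr d)" for d
  have rh: "rhom R (submod M D) (quot (submod M D') C) f"
    unfolding rhom_def
  proof (intro conjI ballI)
    show "f \<in> carrier (submod M D) \<rightarrow> carrier (quot (submod M D') C)"
      using pr Dc unfolding f_def by auto
  next
    fix x y assume xy: "x \<in> carrier (submod M D)" "y \<in> carrier (submod M D)"
    hence xc: "x \<in> carrier M" "y \<in> carrier M" using Dc by auto
    have p: "pr x \<in> D'" "x \<ominus>\<^bsub>M\<^esub> pr x \<in> X" "pr y \<in> D'" "y \<ominus>\<^bsub>M\<^esub> pr y \<in> X" using pr xc by auto
    have "(x \<oplus>\<^bsub>M\<^esub> y) \<ominus>\<^bsub>M\<^esub> (pr x \<oplus>\<^bsub>M\<^esub> pr y) = (x \<ominus>\<^bsub>M\<^esub> pr x) \<oplus>\<^bsub>M\<^esub> (y \<ominus>\<^bsub>M\<^esub> pr y)"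
      using gid(3) xc p D'c by blast
    hence "(x \<oplus>\<^bsub>M\<^esub> y) \<ominus>\<^bsub>M\<^esub> (pr x \<oplus>\<^bsub>M\<^esub> pr y) \<in> X" using sub_props(3)[OF X] p by simp
    hence "f (x \<oplus>\<^bsub>M\<^esub> y) = mcoset M C (pr x \<oplus>\<^bsub>M\<^esub> pr y)"
      unfolding f_def using prc[OF G.a_closed[OF xc] sub_props(3)[OF D' p(1) p(3)]] by simp
    also have "\<dots> = f x \<oplus>\<^bsub>quot M C\<^esub> f y" unfolding f_def using quot_add[OF C] p D'c by auto
    finally show "f (x \<oplus>\<^bsub>submod M D\<^esub> y) = f x \<oplus>\<^bsub>quot (submod M D') C\<^esub> f y" by simp
  next
    fix x r assume xr: "x \<in> carrier (submod M D)" "r \<in> carrier R"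
    hence xc: "x \<in> carrier M" using Dc by auto
    have p: "pr x \<in> D'" "x \<ominus>\<^bsub>M\<^esub> pr x \<in> X" using pr xc by auto
    have pc: "pr x \<in> carrier M" using p D'c by auto
    have "rsmult M x r \<ominus>\<^bsub>M\<^esub> rsmult M (pr x) r \<in> X"
      using sm_minus[OF xc pc xr(2)] sub_props(5)[OF X] p xr by metis
    hence "f (rsmult M x r) = mcoset M C (rsmult M (pr x) r)"
      unfolding f_def using prc[OF smc[OF xc xr(2)] sub_props(5)[OF D' p(1) xr(2)]] by simp
    also have "\<dots> = rsmult (quot M C) (f x) r" unfolding f_def using quot_smult[OF C pc xr(2)] by simp
    finally show "f (rsmult (submod M D) x r) = rsmult (quot (submod M D') C) (f x) r" by simp
  qed
  then obtain h where h: "rhom R (submod M D) (submod M D') h"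
    and hf: "\<forall>d\<in>D. mcoset M C (h d) = f d"
  proof -
    have "\<exists>h. rhom R (submod M D) (submod M D') h \<and> (\<forall>a\<in>carrier (submod M D). mcoset (submod M D') C (h a) = f a)"
      using pj CS rh unfolding rel_projective_def by blast
    thus ?thesis using that by auto
  qed
  have hD: "h d \<in> D'" if "d \<in> D" for d using h that unfolding rhom_def by auto
  have hadd: "h (x \<oplus>\<^bsub>M\<^esub> y) = h x \<oplus>\<^bsub>M\<^esub> h y" if "x \<in> D" "y \<in> D" for x y
    using h that unfolding rhom_def by auto
  have hsm: "h (rsmult M x r) = rsmult M (h x) r" if "x \<in> D" "r \<in> carrier R" for x r
    using h that unfolding rhom_def by auto
  have h0: "h \<zero>\<^bsub>M\<^esub> = \<zero>\<^bsub>M\<^esub>"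
  proof -
    have "h \<zero>\<^bsub>M\<^esub> \<oplus>\<^bsub>M\<^esub> h \<zero>\<^bsub>M\<^esub> = h \<zero>\<^bsub>M\<^esub>" using hadd[of "\<zero>\<^bsub>M\<^esub>" "\<zero>\<^bsub>M\<^esub>"] sub_props(2)[OF D] by simp
    thus ?thesis using grp_cancel hD sub_props(2)[OF D] D'c by blast
  qed
  have hneg: "h (\<ominus>\<^bsub>M\<^esub> x) = \<ominus>\<^bsub>M\<^esub> h x" if x: "x \<in> D" for x
  proof -
    have nx: "\<ominus>\<^bsub>M\<^esub> x \<in> D" using sub_props(4)[OF D x] .
    have "h x \<oplus>\<^bsub>M\<^esub> h (\<ominus>\<^bsub>M\<^esub> x) = \<zero>\<^bsub>M\<^esub>" using hadd[OF x nx] h0 x Dc by (auto simp: G.r_neg)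
    thus ?thesis using hD[OF x] hD[OF nx] D'c by (metis G.a_comm G.minus_equality subsetD)
  qed
  have key: "d \<ominus>\<^bsub>M\<^esub> h d \<in> X" if d: "d \<in> D" for d
  proof -
    have dc: "d \<in> carrier M" using d Dc by auto
    have hc: "h d \<in> carrier M" using hD d D'c by auto
    have p: "pr d \<in> D'" "d \<ominus>\<^bsub>M\<^esub> pr d \<in> X" using pr dc by auto
    have pc: "pr d \<in> carrier M" using p D'c by auto
    have "mcoset M C (h d) = mcoset M C (pr d)" using hf d f_def by auto
    hence "h d \<ominus>\<^bsub>M\<^esub> pr d \<in> X" using coset_eq[OF C hc pc] C_def by auto
    moreover have "d \<ominus>\<^bsub>M\<^esub> h d = (d \<ominus>\<^bsub>M\<^esub> pr d) \<ominus>\<^bsub>M\<^esub> (h d \<ominus>\<^bsub>M\<^esub> pr d)"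
      using gid(2) dc hc pc by blast
    ultimately show ?thesis using sub_minus[OF X] p by simp
  qed
  define A where "A = (\<lambda>d. d \<ominus>\<^bsub>M\<^esub> h d) ` D"
  have AX: "A \<subseteq> X" unfolding A_def using key by auto
  have Ac: "A \<subseteq> carrier M" using AX Xc by auto
  have hc: "h d \<in> carrier M" if "d \<in> D" for d using hD that D'c by auto
  have Asub: "rsubmodule R M A"
    unfolding rsubmodule_def
  proof (intro conjI ballI)
    show "A \<subseteq> carrier M" by (rule Ac)
    have z0: "\<zero>\<^bsub>M\<^esub> \<ominus>\<^bsub>M\<^esub> h \<zero>\<^bsub>M\<^esub> = \<zero>\<^bsub>M\<^esub>"
      using h0 gid(8)[OF G.zero_closed G.zero_closed G.zero_closed G.zero_closed] by simp
    show "\<zero>\<^bsub>M\<^esub> \<in> A" unfolding A_def using sub_props(2)[OF D] z0 by (metis image_eqI)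
  next
    fix a b assume "a \<in> A" "b \<in> A"
    then obtain x y where xy: "x \<in> D" "y \<in> D" "a = x \<ominus>\<^bsub>M\<^esub> h x" "b = y \<ominus>\<^bsub>M\<^esub> h y" unfolding A_def by auto
    have xc: "x \<in> carrier M" "y \<in> carrier M" using xy Dc by auto
    have hxc: "h x \<in> carrier M" "h y \<in> carrier M" using hc xy by auto
    have "(x \<oplus>\<^bsub>M\<^esub> y) \<ominus>\<^bsub>M\<^esub> h (x \<oplus>\<^bsub>M\<^esub> y) = (x \<oplus>\<^bsub>M\<^esub> y) \<ominus>\<^bsub>M\<^esub> (h x \<oplus>\<^bsub>M\<^esub> h y)"
      using hadd[OF xy(1,2)] by simp
    also have "\<dots> = a \<oplus>\<^bsub>M\<^esub> b" using gid(3)[OF xc hxc] xy(3,4) by simp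
    finally have "a \<oplus>\<^bsub>M\<^esub> b = (x \<oplus>\<^bsub>M\<^esub> y) \<ominus>\<^bsub>M\<^esub> h (x \<oplus>\<^bsub>M\<^esub> y)" by simp
    thus "a \<oplus>\<^bsub>M\<^esub> b \<in> A" unfolding A_def using sub_props(3)[OF D xy(1,2)] by blast
  next
    fix a assume "a \<in> A"
    then obtain x where x: "x \<in> D" "a = x \<ominus>\<^bsub>M\<^esub> h x" unfolding A_def by auto
    have xc: "x \<in> carrier M" using x Dc by auto
    have hxc: "h x \<in> carrier M" using hc x by auto
    have "(\<ominus>\<^bsub>M\<^esub> x) \<ominus>\<^bsub>M\<^esub> h (\<ominus>\<^bsub>M\<^esub> x) = (\<ominus>\<^bsub>M\<^esub> x) \<ominus>\<^bsub>M\<^esub> (\<ominus>\<^bsub>M\<^esub> h x)"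
      using hneg[OF x(1)] by simp
    also have "\<dots> = \<ominus>\<^bsub>M\<^esub> a" using gid(4)[OF xc hxc xc xc] x(2) by simp
    finally have "\<ominus>\<^bsub>M\<^esub> a = (\<ominus>\<^bsub>M\<^esub> x) \<ominus>\<^bsub>M\<^esub> h (\<ominus>\<^bsub>M\<^esub> x)" by simp
    thus "\<ominus>\<^bsub>M\<^esub> a \<in> A" unfolding A_def using sub_props(4)[OF D x(1)] by blast
  next
    fix a r assume ar: "a \<in> A" "r \<in> carrier R"
    then obtain x where x: "x \<in> D" "a = x \<ominus>\<^bsub>M\<^esub> h x" unfolding A_def by auto
    have xc: "x \<in> carrier M" using x Dc by auto
    have hxc: "h x \<in> carrier M" using hc x by auto
    have "rsmult M a r = rsmult M x r \<ominus>\<^bsub>M\<^esub> rsmult M (h x) r"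
      using sm_minus[OF xc hxc ar(2)] x(2) by simp
    also have "\<dots> = rsmult M x r \<ominus>\<^bsub>M\<^esub> h (rsmult M x r)" using hsm[OF x(1) ar(2)] by simp
    finally show "rsmult M a r \<in> A" unfolding A_def using sub_props(5)[OF D x(1) ar(2)] by blast
  qed
  have "msum M A D' = carrier M"
  proof
    show "msum M A D' \<subseteq> carrier M" unfolding msum_def using Ac D'c by auto
    show "carrier M \<subseteq> msum M A D'"
    proof
      fix m assume "m \<in> carrier M"
      then obtain d e where de: "d \<in> D" "e \<in> D'" "m = d \<oplus>\<^bsub>M\<^esub> e"
      proof -
        have "m \<in> msum M D D'" using \<open>m \<in> carrier M\<close> DD by simp
        thus ?thesis using that unfolding msum_def by auto
      qed
      have "m = (d \<ominus>\<^bsub>M\<^esub> h d) \<oplus>\<^bsub>M\<^esub> (h d \<oplus>\<^bsub>M\<^esub> e)" using gid(5)[of d "h d" e e] de hc[OF de(1)] subsetD[OF Dc de(1)] subsetD[OF D'c de(2)] by simp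
      moreover have "d \<ominus>\<^bsub>M\<^esub> h d \<in> A" unfolding A_def using de by auto
      moreover have "h d \<oplus>\<^bsub>M\<^esub> e \<in> D'" using hD de sub_props(3)[OF D'] by auto
      ultimately show "m \<in> msum M A D'" unfolding msum_def by blast
    qed
  qed
  moreover have "A \<inter> D' = {\<zero>\<^bsub>M\<^esub>}"
  proof
    show "{\<zero>\<^bsub>M\<^esub>} \<subseteq> A \<inter> D'" using sub_props(2)[OF Asub] sub_props(2)[OF D'] by auto
    show "A \<inter> D' \<subseteq> {\<zero>\<^bsub>M\<^esub>}"
    proof
      fix a assume a: "a \<in> A \<inter> D'"
      then obtain d where d: "d \<in> D" "a = d \<ominus>\<^bsub>M\<^esub> h d" unfolding A_def by auto
      have "d = a \<oplus>\<^bsub>M\<^esub> h d" using d gid(6) hc Dc by auto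
      moreover have "a \<oplus>\<^bsub>M\<^esub> h d \<in> D'" using a hD[OF d(1)] sub_props(3)[OF D'] by auto
      ultimately have "d \<in> D'" by simp
      hence "d = \<zero>\<^bsub>M\<^esub>" using DI d by auto
      thus "a \<in> {\<zero>\<^bsub>M\<^esub>}" using d h0 gid(8)[OF G.zero_closed G.zero_closed G.zero_closed G.zero_closed] by simp
    qed
  qed
  ultimately show ?thesis using AX Asub D' unfolding int_dsum_def by blast
qed


lemma gid2: "a \<in> carrier M \<Longrightarrow> b \<in> carrier M \<Longrightarrow> c \<in> carrier M \<Longrightarrow>
  a \<ominus>\<^bsub>M\<^esub> c = (a \<ominus>\<^bsub>M\<^esub> (b \<oplus>\<^bsub>M\<^esub> c)) \<oplus>\<^bsub>M\<^esub> b"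
  by (simp add: G.minus_eq G.minus_add G.minus_minus G.a_ac G.r_neg G.l_neg G.r_neg1 G.r_neg2 h1)

lemma beta:
  assumes X: "rsubmodule R M X" and AX: "A \<subseteq> X" and ds: "int_dsum R M A D'"
    and sm: "small_in R (submod M D') (X \<inter> D')"
  shows "beta_star R M X A"
proof -
  have A: "rsubmodule R M A" and D': "rsubmodule R M D'" and AD: "msum M A D' = carrier M"
    using ds unfolding int_dsum_def by auto
  have Xc: "X \<subseteq> carrier M" and Ac: "A \<subseteq> carrier M" and D'c: "D' \<subseteq> carrier M"
    using sub_props(1) X A D' by auto
  have mXA: "msum M X A \<subseteq> X" unfolding msum_def using sub_props(3)[OF X] AX by auto
  have p1: "small_in R (quot M X) (mcoset M X ` msum M X A)"
    unfolding small_in_def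
  proof (intro conjI allI impI)
    show "mcoset M X ` msum M X A \<subseteq> carrier (quot M X)" using mXA Xc by (auto simp: quot_carrier)
    fix L assume L: "rsubmodule R (quot M X) L \<and> msum (quot M X) (mcoset M X ` msum M X A) L = carrier (quot M X)"
    have Lc: "L \<subseteq> carrier (quot M X)" using L unfolding rsubmodule_def by auto
    show "L = carrier (quot M X)"
    proof
      show "L \<subseteq> carrier (quot M X)" by (rule Lc)
      show "carrier (quot M X) \<subseteq> L"
      proof
        fix z assume "z \<in> carrier (quot M X)"
        hence "z \<in> msum (quot M X) (mcoset M X ` msum M X A) L" using L by simp
        then obtain u l where ul: "u \<in> msum M X A" "l \<in> L" "z = mcoset M X u \<oplus>\<^bsub>quot M X\<^esub> l"
          unfolding msum_def by auto
        obtain y where y: "y \<in> carrier M" "l = mcoset M X y" using ul(2) Lc by (auto simp: quot_carrier)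
        have u: "u \<in> X" "u \<in> carrier M" using ul(1) mXA Xc by auto
        have "z = mcoset M X (u \<oplus>\<^bsub>M\<^esub> y)" using ul(3) y quot_add[OF X u(2) y(1)] by simp
        also have "\<dots> = mcoset M X y" using coset_eq[OF X G.a_closed[OF u(2) y(1)] y(1)]
            gid(7)[OF u(2) y(1) y(1) y(1)] u by simp
        finally show "z \<in> L" using y ul by simp
      qed
    qed
  qed
  have p2: "small_in R (quot M A) (mcoset M A ` msum M X A)"
    unfolding small_in_def
  proof (intro conjI allI impI)
    show "mcoset M A ` msum M X A \<subseteq> carrier (quot M A)" using mXA Xc by (auto simp: quot_carrier)
    fix L assume L: "rsubmodule R (quot M A) L \<and> msum (quot M A) (mcoset M A ` msum M X A) L = carrier (quot M A)"
    have Lc: "L \<subseteq> carrier (quot M A)" and L0: "A \<in> L"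
      and Ladd: "\<And>p q. p \<in> L \<Longrightarrow> q \<in> L \<Longrightarrow> p \<oplus>\<^bsub>quot M A\<^esub> q \<in> L"
      and Lneg: "\<And>p. p \<in> L \<Longrightarrow> \<ominus>\<^bsub>quot M A\<^esub> p \<in> L"
      and Lsm: "\<And>p r. p \<in> L \<Longrightarrow> r \<in> carrier R \<Longrightarrow> rsmult (quot M A) p r \<in> L"
      using L unfolding rsubmodule_def by (auto simp: quot_zero)
    define L' where "L' = {e \<in> D'. mcoset M A e \<in> L}"
    have L'sub: "rsubmodule R (submod M D') L'"
      unfolding rsubmodule_def
    proof (intro conjI ballI)
      show "L' \<subseteq> carrier (submod M D')" unfolding L'_def by auto
      show "\<zero>\<^bsub>submod M D'\<^esub> \<in> L'" unfolding L'_def using sub_props(2)[OF D'] coset_zero[OF A] L0 by simp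
    next
      fix x y assume xy: "x \<in> L'" "y \<in> L'"
      hence xc: "x \<in> carrier M" "y \<in> carrier M" using D'c unfolding L'_def by auto
      have "mcoset M A x \<in> L" "mcoset M A y \<in> L" using xy unfolding L'_def by auto
      hence "mcoset M A (x \<oplus>\<^bsub>M\<^esub> y) \<in> L" using quot_add[OF A xc] Ladd by metis
      thus "x \<oplus>\<^bsub>submod M D'\<^esub> y \<in> L'" using xy sub_props(3)[OF D'] unfolding L'_def by auto
    next
      fix x assume x: "x \<in> L'"
      hence xc: "x \<in> carrier M" "x \<in> D'" using D'c unfolding L'_def by auto
      have "mcoset M A x \<in> L" using x unfolding L'_def by auto
      hence "mcoset M A (\<ominus>\<^bsub>M\<^esub> x) \<in> L" using quot_neg[OF A xc(1)] Lneg by metis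
      thus "\<ominus>\<^bsub>submod M D'\<^esub> x \<in> L'" using submod_neg[OF D' xc(2)] sub_props(4)[OF D' xc(2)]
        unfolding L'_def by auto
    next
      fix x r assume x: "x \<in> L'" "r \<in> carrier R"
      hence xc: "x \<in> carrier M" "x \<in> D'" using D'c unfolding L'_def by auto
      have "mcoset M A x \<in> L" using x unfolding L'_def by auto
      hence "mcoset M A (rsmult M x r) \<in> L" using quot_smult[OF A xc(1) x(2)] Lsm x(2) by metis
      thus "rsmult (submod M D') x r \<in> L'" using sub_props(5)[OF D' xc(2) x(2)] unfolding L'_def by auto
    qed
    have "msum (submod M D') (X \<inter> D') L' = carrier (submod M D')"
    proof
      show "msum (submod M D') (X \<inter> D') L' \<subseteq> carrier (submod M D')"
        unfolding msum_def L'_def using sub_props(3)[OF D'] by auto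
      show "carrier (submod M D') \<subseteq> msum (submod M D') (X \<inter> D') L'"
      proof
        fix e assume "e \<in> carrier (submod M D')"
        hence e: "e \<in> D'" "e \<in> carrier M" using D'c by auto
        hence "mcoset M A e \<in> carrier (quot M A)" by (auto simp: quot_carrier)
        hence "mcoset M A e \<in> msum (quot M A) (mcoset M A ` msum M X A) L" using L by simp
        then obtain u l where ul: "u \<in> msum M X A" "l \<in> L" "mcoset M A e = mcoset M A u \<oplus>\<^bsub>quot M A\<^esub> l"
          unfolding msum_def by auto
        obtain y where y: "y \<in> carrier M" "l = mcoset M A y" using ul(2) Lc by (auto simp: quot_carrier)
        have u: "u \<in> X" "u \<in> carrier M" using ul(1) mXA Xc by auto
        have "y \<in> msum M A D'" using y AD by simp
        then obtain a1 e1 where ae: "a1 \<in> A" "e1 \<in> D'" "y = a1 \<oplus>\<^bsub>M\<^esub> e1" unfolding msum_def by auto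
        have a1c: "a1 \<in> carrier M" and e1c: "e1 \<in> carrier M" using ae Ac D'c by auto
        have "mcoset M A y = mcoset M A e1" using coset_eq[OF A y(1) e1c] gid(7)[OF a1c e1c e1c e1c] ae by simp
        hence e1L: "e1 \<in> L'" unfolding L'_def using ae ul y by auto
        have "mcoset M A e = mcoset M A (u \<oplus>\<^bsub>M\<^esub> e1)"
          using ul(3) y \<open>mcoset M A y = mcoset M A e1\<close> quot_add[OF A u(2) e1c] by simp
        hence "e \<ominus>\<^bsub>M\<^esub> (u \<oplus>\<^bsub>M\<^esub> e1) \<in> A" using coset_eq[OF A e(2) G.a_closed[OF u(2) e1c]] by simp
        hence "e \<ominus>\<^bsub>M\<^esub> (u \<oplus>\<^bsub>M\<^esub> e1) \<in> X" using AX by auto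
        hence "(e \<ominus>\<^bsub>M\<^esub> (u \<oplus>\<^bsub>M\<^esub> e1)) \<oplus>\<^bsub>M\<^esub> u \<in> X" using sub_props(3)[OF X] u by auto
        hence "e \<ominus>\<^bsub>M\<^esub> e1 \<in> X" using gid2[OF e(2) u(2) e1c] by simp
        moreover have "e \<ominus>\<^bsub>M\<^esub> e1 \<in> D'" using sub_minus[OF D' e(1) ae(2)] .
        moreover have "e = (e \<ominus>\<^bsub>M\<^esub> e1) \<oplus>\<^bsub>M\<^esub> e1" using gid(6)[OF e(2) e1c e1c e1c] by simp
        ultimately show "e \<in> msum (submod M D') (X \<inter> D') L'" unfolding msum_def using e1L by auto
      qed
    qed
    hence L'D: "L' = D'" using sm L'sub unfolding small_in_def by auto
    show "L = carrier (quot M A)"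
    proof
      show "L \<subseteq> carrier (quot M A)" by (rule Lc)
      show "carrier (quot M A) \<subseteq> L"
      proof
        fix z assume "z \<in> carrier (quot M A)"
        then obtain m where m: "m \<in> carrier M" "z = mcoset M A m" by (auto simp: quot_carrier)
        have "m \<in> msum M A D'" using m AD by simp
        then obtain a e where ae: "a \<in> A" "e \<in> D'" "m = a \<oplus>\<^bsub>M\<^esub> e" unfolding msum_def by auto
        have ac: "a \<in> carrier M" and ec: "e \<in> carrier M" using ae Ac D'c by auto
        have "mcoset M A m = mcoset M A e" using coset_eq[OF A m(1) ec] gid(7)[OF ac ec ec ec] ae by simp
        moreover have "e \<in> L'" using L'D ae by simp
        ultimately show "z \<in> L" using m unfolding L'_def by auto
      qed
    qed
  qed
  show ?thesis unfolding beta_star_def using p1 p2 by simp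
qed

end

theorem proposition3p9:
  fixes R :: "'r ring" and M :: "('r, 'm) rmod"
  assumes "rmodule R M"
    and "\<forall>X. is_cyclic_submodule R M X \<longrightarrow>
           (\<exists>D D'. int_dsum R M D D' \<and> supplement R M X D' \<and>
                   rel_projective R (submod M D) (submod M D'))"
  shows "principally_goldie_star_lifting R M"
proof -
  interpret rmc R M by (rule rmc.intro) (rule assms(1))
  show ?thesis unfolding principally_goldie_star_lifting_def
  proof (intro allI impI)
    fix X assume cX: "is_cyclic_submodule R M X"
    then obtain m where m: "m \<in> carrier M" "X = cyclic_sub R M m" unfolding is_cyclic_submodule_def by auto
    have X: "rsubmodule R M X" using cyclic_is_sub[OF m(1)] m(2) by simp
    obtain D D' where DD: "int_dsum R M D D'" "supplement R M X D'" "rel_projective R (submod M D) (submod M D')"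
      using assms(2) cX by blast
    obtain A where A: "A \<subseteq> X" "int_dsum R M A D'" using exists_A[OF X DD] by blast
    have sm: "small_in R (submod M D') (X \<inter> D')" using DD(2) unfolding supplement_def by auto
    have "direct_summand R M A" unfolding direct_summand_def using A by blast
    moreover have "beta_star R M X A" using beta[OF X A sm] .
    ultimately show "\<exists>D. direct_summand R M D \<and> beta_star R M X D" by blast
  qed
qed

end
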